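(* Let $\kappa=(a,b,c,d)$ with $a,b,c,d\notin\{\pm2\}$, let $\rho\in\mathcal H_\kappa$, and let $(x,y,z)=(\operatorname{tr}\rho(AB),\operatorname{tr}\rho(BC),\operatorname{tr}\rho(CA))$. Then $\rho$ is a $\mathrm{Spin}(2)$-representation if and only if $x$ is an endpoint of both $I_{a,b}$ and $I_{c,d}$, $y$ is an endpoint of both $I_{b,c}$ and $I_{a,d}$, and $z$ is an endpoint of both $I_{a,c}$ and $I_{b,d}$.
   Context: $M$ is a four-holed sphere with $\pi_1(M)=\langle A,B,C,D : ABCD=I\rangle$, $A,B,C,D$ the boundary classes. For $\kappa=(a,b,c,d)\in[-2,2]^4$, $\mathcal H_\kappa$ is the set of homomorphisms $\rho:\pi_1(M)\to\mathrm{SU}(2)$ with $\operatorname{tr}\rho(A)=a$, $\operatorname{tr}\rho(B)=b$, $\operatorname{tr}\rho(C)=c$, $\operatorname{tr}\rho(D)=d$. For $s,t\in[-2,2]$, $I_{s,t}=\Big[\frac{st-\sqrt{(s^2-4)(t^2-4)}}{2},\ \frac{st+\sqrt{(s^2-4)(t^2-4)}}{2}\Big]$. $\mathrm{Spin}(2)\subset\mathrm{SU}(2)$ is the circle subgroup $\{e^{i\theta}\}$, where $e^{i\theta}$ denotes the matrix $\begin{pmatrix}\cos\theta&\sin\theta\\-\sin\theta&\cos\theta\end{pmatrix}$. For a subgroup $G\subset\mathrm{SU}(2)$, $\rho$ is called a $G$-representation if some $\mathrm{SU}(2)$-conjugate of $\rho$ has image contained in $G$. *)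

theory Defs
  imports "HOL-Analysis.Analysis"
begin

type_synonym cmat = "complex^2^2"

definition mtr :: "cmat \<Rightarrow> complex" where
  "mtr M = M$1$1 + M$2$2"

definition madj :: "cmat \<Rightarrow> cmat" where
  "madj M = (\<chi> i j. cnj (M$j$i))"

definition SU2 :: "cmat set" where
  "SU2 = {M. M ** madj M = mat 1 \<and> det M = 1}"

definition eitheta :: "real \<Rightarrow> cmat" where
  "eitheta \<theta> = (\<chi> i j. if i = j then complex_of_real (cos \<theta>)
                     else if i = 1 then complex_of_real (sin \<theta>)
                     else - complex_of_real (sin \<theta>))"

definition Spin2 :: "cmat set" where
  "Spin2 = range eitheta"

text \<open>A homomorphism pi_1(M) -> SU(2) is the quadruple (rho A, rho B, rho C, rho D)
  of elements of SU(2) with rho A rho B rho C rho D = I.\<close>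
definition is_rep :: "cmat \<Rightarrow> cmat \<Rightarrow> cmat \<Rightarrow> cmat \<Rightarrow> bool" where
  "is_rep RA RB RC RD \<longleftrightarrow> RA \<in> SU2 \<and> RB \<in> SU2 \<and> RC \<in> SU2 \<and> RD \<in> SU2
     \<and> RA ** RB ** RC ** RD = mat 1"

definition H_kappa :: "real \<Rightarrow> real \<Rightarrow> real \<Rightarrow> real \<Rightarrow> (cmat \<times> cmat \<times> cmat \<times> cmat) set" where
  "H_kappa a b c d = {(RA, RB, RC, RD). is_rep RA RB RC RD
     \<and> mtr RA = complex_of_real a \<and> mtr RB = complex_of_real b
     \<and> mtr RC = complex_of_real c \<and> mtr RD = complex_of_real d}"

inductive_set rep_image :: "cmat \<Rightarrow> cmat \<Rightarrow> cmat \<Rightarrow> cmat \<Rightarrow> cmat set"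
  for RA RB RC RD where
  one: "mat 1 \<in> rep_image RA RB RC RD"
| mul: "M \<in> rep_image RA RB RC RD \<Longrightarrow> X \<in> {RA, RB, RC, RD} \<Longrightarrow> M ** X \<in> rep_image RA RB RC RD"
| mul_inv: "M \<in> rep_image RA RB RC RD \<Longrightarrow> X \<in> {RA, RB, RC, RD} \<Longrightarrow> M ** matrix_inv X \<in> rep_image RA RB RC RD"

definition is_G_rep :: "cmat set \<Rightarrow> cmat \<Rightarrow> cmat \<Rightarrow> cmat \<Rightarrow> cmat \<Rightarrow> bool" where
  "is_G_rep G RA RB RC RD \<longleftrightarrow>
     (\<exists>g \<in> SU2. \<forall>M \<in> rep_image RA RB RC RD. g ** M ** matrix_inv g \<in> G)"

definition I_lo :: "real \<Rightarrow> real \<Rightarrow> real" where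
  "I_lo s t = (s * t - sqrt ((s^2 - 4) * (t^2 - 4))) / 2"

definition I_hi :: "real \<Rightarrow> real \<Rightarrow> real" where
  "I_hi s t = (s * t + sqrt ((s^2 - 4) * (t^2 - 4))) / 2"

definition I_int :: "real \<Rightarrow> real \<Rightarrow> real set" where
  "I_int s t = {I_lo s t .. I_hi s t}"

definition is_endpoint :: "real \<Rightarrow> real \<Rightarrow> real \<Rightarrow> bool" where
  "is_endpoint x s t \<longleftrightarrow> x = I_lo s t \<or> x = I_hi s t"

end

theory Submission
  imports Defs
begin

definition Q :: "real \<Rightarrow> real \<Rightarrow> real \<Rightarrow> real \<Rightarrow> cmat" where
  "Q t p q r = (\<chi> i j. if i = 1 then (if j = 1 then Complex t p else Complex q r)
                        else (if j = 1 then Complex (-q) r else Complex t (-p)))"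

lemma Q_entries[simp]:
  "Q t p q r $ 1 $ 1 = Complex t p" "Q t p q r $ 1 $ 2 = Complex q r"
  "Q t p q r $ 2 $ 1 = Complex (-q) r" "Q t p q r $ 2 $ 2 = Complex t (-p)"
  by (simp_all add: Q_def)

lemma Q_mult:
  "Q t1 p1 q1 r1 ** Q t2 p2 q2 r2 =
   Q (t1*t2 - p1*p2 - q1*q2 - r1*r2) (t1*p2 + t2*p1 + (q1*r2 - r1*q2))
     (t1*q2 + t2*q1 + (r1*p2 - p1*r2)) (t1*r2 + t2*r1 + (p1*q2 - q1*p2))"
  by (simp add: vec_eq_iff forall_2 matrix_matrix_mult_def sum_2 complex_eq_iff algebra_simps)

lemma Q_one: "Q 1 0 0 0 = mat 1"
  by (simp add: vec_eq_iff forall_2 mat_def Q_def complex_eq_iff)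

lemma mtr_Q: "mtr (Q t p q r) = complex_of_real (2*t)"
  by (simp add: mtr_def complex_eq_iff)

lemma Q_eq_iff: "Q t p q r = Q t' p' q' r' \<longleftrightarrow> t = t' \<and> p = p' \<and> q = q' \<and> r = r'"
  by (auto simp: vec_eq_iff forall_2)

lemma SU2_Q:
  assumes "M \<in> SU2"
  shows "M = Q (Re (M$1$1)) (Im (M$1$1)) (Re (M$1$2)) (Im (M$1$2))"
    "(Re (M$1$1))^2 + (Im (M$1$1))^2 + (Re (M$1$2))^2 + (Im (M$1$2))^2 = 1"
proof -
  define Ad :: cmat where "Ad = (\<chi> i j. if i = 1 then (if j = 1 then M$2$2 else - M$1$2)
                        else (if j = 1 then - M$2$1 else M$1$1))"
  have d: "det M = 1" and u: "M ** madj M = mat 1" using assms by (auto simp: SU2_def)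
  have "Ad ** M = mat 1"
    using d by (simp add: Ad_def det_2 vec_eq_iff forall_2 matrix_matrix_mult_def sum_2 mat_def algebra_simps)
  then have "madj M = Ad"
    by (metis matrix_mul_assoc matrix_mul_lid matrix_mul_rid u)
  then have e: "cnj (M$1$1) = M$2$2" "cnj (M$2$1) = - M$1$2" "cnj (M$1$2) = - M$2$1"
    by (auto simp: madj_def Ad_def vec_eq_iff forall_2 dest!: spec[of _ 1] spec[of _ 2])
  then have e2: "M$2$2 = cnj (M$1$1)" "M$2$1 = - cnj (M$1$2)"
    by (metis complex_cnj_cnj complex_cnj_minus)+
  show "M = Q (Re (M$1$1)) (Im (M$1$1)) (Re (M$1$2)) (Im (M$1$2))"
    using e2 by (simp add: vec_eq_iff forall_2 complex_eq_iff)
  have "M$1$1 * cnj (M$1$1) + M$1$2 * cnj (M$1$2) = 1"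
    using d e2 by (simp add: det_2)
  then show "(Re (M$1$1))^2 + (Im (M$1$1))^2 + (Re (M$1$2))^2 + (Im (M$1$2))^2 = 1"
    by (simp add: complex_eq_iff power2_eq_square)
qed

lemma SU2_ex: "M \<in> SU2 \<Longrightarrow> \<exists>t p q r. M = Q t p q r \<and> t^2 + p^2 + q^2 + r^2 = 1"
  using SU2_Q by blast

lemma Q_SU2: "t^2 + p^2 + q^2 + r^2 = 1 \<Longrightarrow> Q t p q r \<in> SU2"
proof -
  assume h: "t^2 + p^2 + q^2 + r^2 = 1"
  have "madj (Q t p q r) = Q t (-p) (-q) (-r)"
    by (simp add: madj_def vec_eq_iff forall_2 complex_eq_iff)
  moreover have "Q t p q r ** Q t (-p) (-q) (-r) = mat 1"
    using h by (simp add: Q_mult Q_one[symmetric] Q_eq_iff power2_eq_square algebra_simps)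
  moreover have "det (Q t p q r) = 1"
    using h by (simp add: det_2 complex_eq_iff power2_eq_square algebra_simps)
  ultimately show ?thesis by (simp add: SU2_def)
qed

lemma matrix_inv_eq:
  fixes A B :: cmat
  assumes "A ** B = mat 1" "B ** A = mat 1"
  shows "matrix_inv A = B"
proof -
  have "\<exists>A'. A ** A' = mat 1 \<and> A' ** A = mat 1" using assms by blast
  then have h: "A ** matrix_inv A = mat 1 \<and> matrix_inv A ** A = mat 1"
    unfolding matrix_inv_def by (rule someI_ex)
  have "matrix_inv A = matrix_inv A ** (A ** B)" using assms by simp
  also have "\<dots> = (matrix_inv A ** A) ** B" by (simp add: matrix_mul_assoc)
  also have "\<dots> = B" using h by simp
  finally show ?thesis .
qed

lemma Q_inv: "t^2 + p^2 + q^2 + r^2 = 1 \<Longrightarrow> matrix_inv (Q t p q r) = Q t (-p) (-q) (-r)"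
  by (rule matrix_inv_eq) (simp_all add: Q_mult Q_one[symmetric] Q_eq_iff power2_eq_square algebra_simps)

lemma eitheta_Q: "eitheta th = Q (cos th) 0 (sin th) 0"
  by (simp add: eitheta_def Q_def vec_eq_iff forall_2 complex_eq_iff)

lemma mtr_comm: "mtr (X ** Y) = mtr (Y ** X)"
  by (simp add: mtr_def matrix_matrix_mult_def sum_2 algebra_simps)

lemma endpoint_cos: "is_endpoint (2 * cos (al + be)) (2 * cos al) (2 * cos be)"
proof -
  have E: "((2 * cos al)^2 - 4) * ((2 * cos be)^2 - 4) = (4 * (sin al * sin be))^2"
  proof -
    have s1: "sin al * sin al = 1 - cos al * cos al" "sin be * sin be = 1 - cos be * cos be"
      using sin_squared_eq[of al] sin_squared_eq[of be] by (simp_all add: power2_eq_square)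
    show ?thesis unfolding power2_eq_square using s1 by algebra
  qed
  have S: "sqrt (((2 * cos al)^2 - 4) * ((2 * cos be)^2 - 4)) = 4 * \<bar>sin al * sin be\<bar>"
    unfolding E real_sqrt_abs by simp
  show ?thesis
    unfolding is_endpoint_def I_lo_def I_hi_def S
    by (cases "sin al * sin be \<ge> 0") (auto simp: cos_add abs_if)
qed

lemma cross_zero:
  fixes tA pA qA rA tB pB qB rB x :: real
  assumes hA: "tA^2 + pA^2 + qA^2 + rA^2 = 1" and hB: "tB^2 + pB^2 + qB^2 + rB^2 = 1"
    and x: "x = 2 * (tA*tB - (pA*pB + qA*qB + rA*rB))"
    and e: "is_endpoint x (2*tA) (2*tB)"
  shows "qA*rB - rA*qB = 0" "rA*pB - pA*rB = 0" "pA*qB - qA*pB = 0"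
proof -
  define S where "S = sqrt (((2*tA)^2 - 4) * ((2*tB)^2 - 4))"
  have P: "((2*tA)^2 - 4) * ((2*tB)^2 - 4) = 16 * ((pA^2+qA^2+rA^2) * (pB^2+qB^2+rB^2))"
    using hA hB unfolding power2_eq_square by algebra
  have S2: "S^2 = 16 * ((pA^2+qA^2+rA^2) * (pB^2+qB^2+rB^2))"
    unfolding S_def P by (simp add: real_sqrt_pow2)
  have "x = (2*tA*(2*tB) - S)/2 \<or> x = (2*tA*(2*tB) + S)/2"
    using e unfolding is_endpoint_def I_lo_def I_hi_def S_def by simp
  then have "S = -4 * (pA*pB + qA*qB + rA*rB) \<or> S = 4 * (pA*pB + qA*qB + rA*rB)"
    using x by auto
  then have "S^2 = 16 * (pA*pB + qA*qB + rA*rB)^2"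
    by (elim disjE) (simp_all only: power_mult_distrib, simp_all)
  then have L: "(qA*rB - rA*qB)^2 + (rA*pB - pA*rB)^2 + (pA*qB - qA*pB)^2 = 0"
    using S2 by (simp add: power2_eq_square algebra_simps)
  show "qA*rB - rA*qB = 0" "rA*pB - pA*rB = 0" "pA*qB - qA*pB = 0"
    using L by (smt (verit) power2_less_eq_zero_iff zero_le_power2)+
qed

lemma parallel:
  fixes x1 x2 x3 y1 y2 y3 :: real
  assumes "x2*y3 - x3*y2 = 0" "x3*y1 - x1*y3 = 0" "x1*y2 - x2*y1 = 0"
  shows "(x1^2+x2^2+x3^2) * y1 = (x1*y1+x2*y2+x3*y3) * x1"
    "(x1^2+x2^2+x3^2) * y2 = (x1*y1+x2*y2+x3*y3) * x2"
    "(x1^2+x2^2+x3^2) * y3 = (x1*y1+x2*y2+x3*y3) * x3"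
proof -
  have "(x1^2+x2^2+x3^2) * y1 - (x1*y1+x2*y2+x3*y3) * x1 = x2*(x2*y1 - x1*y2) + x3*(x3*y1 - x1*y3)"
    by (simp add: power2_eq_square algebra_simps)
  then show "(x1^2+x2^2+x3^2) * y1 = (x1*y1+x2*y2+x3*y3) * x1" using assms by simp
  have "(x1^2+x2^2+x3^2) * y2 - (x1*y1+x2*y2+x3*y3) * x2 = x1*(x1*y2 - x2*y1) + x3*(x3*y2 - x2*y3)"
    by (simp add: power2_eq_square algebra_simps)
  then show "(x1^2+x2^2+x3^2) * y2 = (x1*y1+x2*y2+x3*y3) * x2" using assms by simp
  have "(x1^2+x2^2+x3^2) * y3 - (x1*y1+x2*y2+x3*y3) * x3 = x1*(x1*y3 - x3*y1) + x2*(x2*y3 - x3*y2)"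
    by (simp add: power2_eq_square algebra_simps)
  then show "(x1^2+x2^2+x3^2) * y3 = (x1*y1+x2*y2+x3*y3) * x3" using assms by simp
qed

lemma rotation:
  fixes n1 n2 n3 :: real
  assumes n: "n1^2 + n2^2 + n3^2 = 1" and n2: "n2 \<ge> 0"
  shows "\<exists>g \<in> SU2. \<forall>t s. g ** Q t (s*n1) (s*n2) (s*n3) ** matrix_inv g = Q t 0 s 0"
proof -
  define r where "r = sqrt (2 + 2*n2)"
  define u where "u = 1 / r"
  have r2: "r^2 = 2 + 2*n2" unfolding r_def using n2 by simp
  have rpos: "r > 0" unfolding r_def using n2 by simp
  have u2: "u*u*(2 + 2*n2) = 1" using r2 rpos n2 unfolding u_def by (simp add: power2_eq_square field_simps)
  have gn: "(u*(1+n2))^2 + (u*(-n3))^2 + 0^2 + (u*n1)^2 = 1"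
    using u2 n by (simp add: power2_eq_square algebra_simps) algebra
  define g where "g = Q (u*(1+n2)) (u*(-n3)) 0 (u*n1)"
  have "g \<in> SU2" unfolding g_def by (rule Q_SU2[OF gn])
  moreover have "g ** Q t (s*n1) (s*n2) (s*n3) ** matrix_inv g = Q t 0 s 0" for t s
    unfolding g_def Q_inv[OF gn] Q_mult Q_eq_iff using u2 n
    by (simp add: power2_eq_square algebra_simps; algebra)
  ultimately show ?thesis by blast
qed


lemma Q_inv_prod: "t^2 + p^2 + q^2 + r^2 = 1 \<Longrightarrow>
   Q t p q r ** matrix_inv (Q t p q r) = mat 1 \<and> matrix_inv (Q t p q r) ** Q t p q r = mat 1"
  by (simp add: Q_inv Q_mult Q_one[symmetric] Q_eq_iff power2_eq_square algebra_simps)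

lemma eitheta_mult: "eitheta al ** eitheta be = eitheta (al + be)"
  by (simp add: eitheta_Q Q_mult Q_eq_iff cos_add sin_add algebra_simps)

lemma mtr_eitheta: "mtr (eitheta al) = complex_of_real (2 * cos al)"
  by (simp add: eitheta_Q mtr_Q)

lemma in_rep_image: "X \<in> {RA, RB, RC, RD} \<Longrightarrow> X \<in> rep_image RA RB RC RD"
  using rep_image.mul[OF rep_image.one] by (metis matrix_mul_lid)

lemma forward:
  fixes a b c d x y z :: real and RA RB RC RD :: cmat
  assumes rep: "is_rep RA RB RC RD"
    and ta: "mtr RA = complex_of_real a" and tb: "mtr RB = complex_of_real b"
    and tc: "mtr RC = complex_of_real c" and td: "mtr RD = complex_of_real d"
    and tx: "mtr (RA ** RB) = complex_of_real x"
    and ty: "mtr (RB ** RC) = complex_of_real y"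
    and tz: "mtr (RC ** RA) = complex_of_real z"
    and G: "is_G_rep Spin2 RA RB RC RD"
  shows "is_endpoint x a b \<and> is_endpoint x c d \<and>
            is_endpoint y b c \<and> is_endpoint y a d \<and>
            is_endpoint z a c \<and> is_endpoint z b d"
proof -
  obtain g where gS: "g \<in> SU2" and gM: "\<forall>M \<in> rep_image RA RB RC RD. g ** M ** matrix_inv g \<in> Spin2"
    using G unfolding is_G_rep_def by blast
  obtain tg pg qg rg where gQ: "g = Q tg pg qg rg" and gn: "tg^2 + pg^2 + qg^2 + rg^2 = 1"
    using SU2_ex[OF gS] by blast
  define gi where "gi = matrix_inv g"
  have g1: "g ** gi = mat 1" "gi ** g = mat 1" using Q_inv_prod[OF gn] unfolding gi_def gQ by auto
  define phi where "phi X = g ** X ** gi" for X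
  have phim: "phi (X ** Y) = phi X ** phi Y" for X Y
  proof -
    have "phi X ** phi Y = g ** X ** (gi ** g) ** Y ** gi"
      unfolding phi_def by (simp add: matrix_mul_assoc)
    then show ?thesis unfolding phi_def g1 by (simp add: matrix_mul_assoc)
  qed
  have phit: "mtr (phi X) = mtr X" for X
  proof -
    have "mtr (phi X) = mtr (gi ** (g ** X))" unfolding phi_def by (rule mtr_comm)
    also have "\<dots> = mtr X" by (metis matrix_mul_assoc g1(2) matrix_mul_lid)
    finally show ?thesis .
  qed
  have ex: "\<exists>al. phi X = eitheta al" if "X \<in> {RA, RB, RC, RD}" for X
    using gM in_rep_image[OF that] unfolding phi_def gi_def Spin2_def by auto
  obtain al where eA: "phi RA = eitheta al" using ex[of RA] by auto
  obtain be where eB: "phi RB = eitheta be" using ex[of RB] by auto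
  obtain ga where eC: "phi RC = eitheta ga" using ex[of RC] by auto
  obtain de where eD: "phi RD = eitheta de" using ex[of RD] by auto
  have "phi (RA ** RB ** RC ** RD) = mat 1"
    using rep g1 unfolding is_rep_def phi_def by simp
  then have "eitheta (al + be + ga + de) = mat 1"
    unfolding phim eA eB eC eD eitheta_mult .
  then have sg: "cos (al + be + ga + de) = 1" "sin (al + be + ga + de) = 0"
    unfolding eitheta_Q Q_one[symmetric] Q_eq_iff by auto
  have tr: "r = 2 * cos th" if "mtr X = complex_of_real r" "phi X = eitheta th" for X th r
  proof -
    have "complex_of_real r = mtr (phi X)" using that(1) phit[of X] by simp
    also have "\<dots> = complex_of_real (2 * cos th)" using that(2) mtr_eitheta by simp
    finally show ?thesis by (simp only: of_real_eq_iff)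
  qed
  have a: "a = 2 * cos al" using tr[OF ta eA] .
  have b: "b = 2 * cos be" using tr[OF tb eB] .
  have c: "c = 2 * cos ga" using tr[OF tc eC] .
  have d: "d = 2 * cos de" using tr[OF td eD] .
  have "phi (RA ** RB) = eitheta (al + be)" by (simp only: phim eA eB eitheta_mult)
  note x = tr[OF tx this]
  have "phi (RB ** RC) = eitheta (be + ga)" by (simp only: phim eB eC eitheta_mult)
  note y = tr[OF ty this]
  have "phi (RC ** RA) = eitheta (al + ga)" by (simp only: phim eC eA eitheta_mult add.commute)
  note z = tr[OF tz this]
  have cs: "cos w = cos (al + be + ga + de - w)" for w
    using sg by (simp add: cos_diff)
  have "al + be + ga + de - (ga + de) = al + be" "al + be + ga + de - (al + de) = be + ga"
    "al + be + ga + de - (be + de) = al + ga" by simp_all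
  then have x2: "x = 2 * cos (ga + de)" and y2: "y = 2 * cos (al + de)" and z2: "z = 2 * cos (be + de)"
    using x y z cs[of "ga + de"] cs[of "al + de"] cs[of "be + de"] by simp_all
  have "is_endpoint x a b" unfolding x a b by (rule endpoint_cos)
  moreover have "is_endpoint x c d" unfolding x2 c d by (rule endpoint_cos)
  moreover have "is_endpoint y b c" unfolding y b c by (rule endpoint_cos)
  moreover have "is_endpoint y a d" unfolding y2 a d by (rule endpoint_cos)
  moreover have "is_endpoint z a c" unfolding z a c by (rule endpoint_cos)
  moreover have "is_endpoint z b d" unfolding z2 b d by (rule endpoint_cos)
  ultimately show ?thesis by blast
qed

definition Tset :: "real \<Rightarrow> real \<Rightarrow> real \<Rightarrow> cmat set" where
  "Tset n1 n2 n3 = {M. \<exists>t s. M = Q t (s*n1) (s*n2) (s*n3) \<and> t^2 + s^2 = 1}"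

lemma T_mult:
  assumes n: "n1^2 + n2^2 + n3^2 = 1" and M: "M \<in> Tset n1 n2 n3" and N: "N \<in> Tset n1 n2 n3"
  shows "M ** N \<in> Tset n1 n2 n3"
proof -
  obtain t1 k1 where 1: "M = Q t1 (k1*n1) (k1*n2) (k1*n3)" "t1^2 + k1^2 = 1" using M by (auto simp: Tset_def)
  obtain t2 k2 where 2: "N = Q t2 (k2*n1) (k2*n2) (k2*n3)" "t2^2 + k2^2 = 1" using N by (auto simp: Tset_def)
  have "M ** N = Q (t1*t2 - k1*k2) ((t1*k2 + t2*k1)*n1) ((t1*k2 + t2*k1)*n2) ((t1*k2 + t2*k1)*n3)"
    unfolding 1 2 Q_mult Q_eq_iff apply (intro conjI) using n unfolding power2_eq_square apply algebra by (simp_all add: algebra_simps)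
  moreover have "(t1*t2 - k1*k2)^2 + (t1*k2 + t2*k1)^2 = 1"
    using 1(2) 2(2) unfolding power2_eq_square by algebra
  ultimately show ?thesis unfolding Tset_def by blast
qed

lemma T_inv:
  assumes n: "n1^2 + n2^2 + n3^2 = 1" and M: "M \<in> Tset n1 n2 n3"
  shows "matrix_inv M \<in> Tset n1 n2 n3" "matrix_inv M ** M = mat 1"
proof -
  obtain t s where 1: "M = Q t (s*n1) (s*n2) (s*n3)" "t^2 + s^2 = 1" using M by (auto simp: Tset_def)
  have nn: "t^2 + (s*n1)^2 + (s*n2)^2 + (s*n3)^2 = 1"
    using 1(2) n unfolding power2_eq_square by algebra
  show "matrix_inv M \<in> Tset n1 n2 n3"
  proof -
    have "Q t (-(s*n1)) (-(s*n2)) (-(s*n3)) = Q t ((-s)*n1) ((-s)*n2) ((-s)*n3)" by simp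
    moreover have "t^2 + (-s)^2 = 1" using 1(2) by simp
    ultimately show ?thesis unfolding 1 Q_inv[OF nn] Tset_def by blast
  qed
  show "matrix_inv M ** M = mat 1" using Q_inv_prod[OF nn] 1 by simp
qed

lemma T_mem:
  assumes n: "n1^2 + n2^2 + n3^2 = 1" and h: "t^2 + p^2 + q^2 + r^2 = 1"
    and "p = l*n1" "q = l*n2" "r = l*n3"
  shows "Q t p q r \<in> Tset n1 n2 n3"
proof -
  have "t^2 + l^2 = 1" using h n assms(3-5) unfolding power2_eq_square by algebra
  then show ?thesis unfolding Tset_def using assms(3-5) by blast
qed


lemma backward:
  fixes a b c x z :: real and RA RB RC RD :: cmat
  assumes rep: "is_rep RA RB RC RD"
    and a2: "a \<in> {-2..2} - {-2, 2}"
    and ta: "mtr RA = complex_of_real a" and tb: "mtr RB = complex_of_real b"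
    and tc: "mtr RC = complex_of_real c"
    and tx: "mtr (RA ** RB) = complex_of_real x"
    and tz: "mtr (RC ** RA) = complex_of_real z"
    and ex: "is_endpoint x a b" and ez: "is_endpoint z a c"
  shows "is_G_rep Spin2 RA RB RC RD"
proof -
  have S: "RA \<in> SU2" "RB \<in> SU2" "RC \<in> SU2" "RD \<in> SU2" and prod: "RA ** RB ** RC ** RD = mat 1"
    using rep by (auto simp: is_rep_def)
  obtain tA pA qA rA where A: "RA = Q tA pA qA rA" and hA: "tA^2 + pA^2 + qA^2 + rA^2 = 1"
    using SU2_ex[OF S(1)] by blast
  obtain tB pB qB rB where B: "RB = Q tB pB qB rB" and hB: "tB^2 + pB^2 + qB^2 + rB^2 = 1"
    using SU2_ex[OF S(2)] by blast
  obtain tC pC qC rC where C: "RC = Q tC pC qC rC" and hC: "tC^2 + pC^2 + qC^2 + rC^2 = 1"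
    using SU2_ex[OF S(3)] by blast
  have a: "a = 2*tA" using ta unfolding A mtr_Q by (auto simp: complex_eq_iff)
  have b: "b = 2*tB" using tb unfolding B mtr_Q by (auto simp: complex_eq_iff)
  have c: "c = 2*tC" using tc unfolding C mtr_Q by (auto simp: complex_eq_iff)
  have x: "x = 2 * (tA*tB - (pA*pB + qA*qB + rA*rB))" using tx unfolding A B Q_mult mtr_Q by (auto simp: complex_eq_iff)
  have z: "z = 2 * (tA*tC - (pA*pC + qA*qC + rA*rC))" using tz unfolding A C Q_mult mtr_Q
    by (auto simp: complex_eq_iff algebra_simps)
  note cAB = cross_zero[OF hA hB x ex[unfolded a b]]
  note cAC = cross_zero[OF hA hC z ez[unfolded a c]]
  have "tA^2 < 1" using a2 a by (auto simp: abs_square_less_1)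
  then have Npos: "pA^2 + qA^2 + rA^2 > 0" using hA by linarith
  define N where "N = pA^2 + qA^2 + rA^2"
  define L where "L = sqrt N"
  have Lpos: "L > 0" unfolding L_def N_def using Npos by simp
  have L2: "L^2 = N" unfolding L_def N_def using Npos by simp
  define sg :: real where "sg = (if qA \<ge> 0 then 1 else -1)"
  have sg2: "sg * sg = 1" unfolding sg_def by simp
  define n1 where "n1 = sg * pA / L"
  define n2 where "n2 = sg * qA / L"
  define n3 where "n3 = sg * rA / L"
  have sg2': "sg^2 = 1" using sg2 by (simp add: power2_eq_square)
  have e1: "n1^2 = pA^2/N" unfolding n1_def using sg2' L2 by (simp add: power_divide power_mult_distrib)
  have e2: "n2^2 = qA^2/N" unfolding n2_def using sg2' L2 by (simp add: power_divide power_mult_distrib)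
  have e3: "n3^2 = rA^2/N" unfolding n3_def using sg2' L2 by (simp add: power_divide power_mult_distrib)
  have nn: "n1^2 + n2^2 + n3^2 = 1"
    unfolding e1 e2 e3 add_divide_distrib[symmetric] using Npos unfolding N_def by simp
  have n2p: "n2 \<ge> 0" unfolding n2_def sg_def using Lpos by auto
  have uA: "pA = (sg*L)*n1" "qA = (sg*L)*n2" "rA = (sg*L)*n3"
    unfolding n1_def n2_def n3_def using Lpos sg2 by (auto simp: field_simps)
  have par: "p = (d / N * (sg*L))*n1 \<and> q = (d / N * (sg*L))*n2 \<and> r = (d / N * (sg*L))*n3"
    if "N * p = d * pA" "N * q = d * qA" "N * r = d * rA" for p q r d
  proof -
    have "p = d / N * pA" "q = d / N * qA" "r = d / N * rA"
      using that Npos unfolding N_def by (auto simp: field_simps)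
    then show ?thesis using uA by simp
  qed
  have TA: "RA \<in> Tset n1 n2 n3" unfolding A using T_mem[OF nn hA uA] .
  have TB: "RB \<in> Tset n1 n2 n3"
  proof -
    have "N * pB = (pA*pB+qA*qB+rA*rB) * pA" "N * qB = (pA*pB+qA*qB+rA*rB) * qA"
      "N * rB = (pA*pB+qA*qB+rA*rB) * rA"
      unfolding N_def using parallel[OF cAB] by auto
    from par[OF this] show ?thesis unfolding B using T_mem[OF nn hB] by blast
  qed
  have TC: "RC \<in> Tset n1 n2 n3"
  proof -
    have "N * pC = (pA*pC+qA*qC+rA*rC) * pA" "N * qC = (pA*pC+qA*qC+rA*rC) * qA"
      "N * rC = (pA*pC+qA*qC+rA*rC) * rA"
      unfolding N_def using parallel[OF cAC] by auto
    from par[OF this] show ?thesis unfolding C using T_mem[OF nn hC] by blast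
  qed
  define P where "P = RA ** RB ** RC"
  have TP: "P \<in> Tset n1 n2 n3" unfolding P_def using T_mult[OF nn] TA TB TC by blast
  have "RD = (matrix_inv P ** P) ** RD" using T_inv(2)[OF nn TP] by simp
  also have "\<dots> = matrix_inv P ** (P ** RD)" by (simp only: matrix_mul_assoc)
  also have "\<dots> = matrix_inv P" using prod unfolding P_def by simp
  finally have TD: "RD \<in> Tset n1 n2 n3" using T_inv(1)[OF nn TP] by simp
  have TI: "M \<in> Tset n1 n2 n3" if "M \<in> rep_image RA RB RC RD" for M
    using that
  proof (induction rule: rep_image.induct)
    case one
    have "mat 1 = Q 1 (0*n1) (0*n2) (0*n3)" using Q_one by simp
    then show ?case unfolding Tset_def by fastforce
  next
    case (mul M X)
    then show ?case using T_mult[OF nn] TA TB TC TD by blast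
  next
    case (mul_inv M X)
    then show ?case using T_mult[OF nn] T_inv(1)[OF nn] TA TB TC TD by blast
  qed
  obtain g where gS: "g \<in> SU2" and gR: "\<forall>t s. g ** Q t (s*n1) (s*n2) (s*n3) ** matrix_inv g = Q t 0 s 0"
    using rotation[OF nn n2p] by blast
  have "g ** M ** matrix_inv g \<in> Spin2" if hM: "M \<in> rep_image RA RB RC RD" for M
  proof -
    obtain t s where M: "M = Q t (s*n1) (s*n2) (s*n3)" and ts: "t^2 + s^2 = 1"
      using TI[OF hM] unfolding Tset_def by blast
    obtain th where "t = cos th" "s = sin th" using sincos_total_2pi[OF ts] by metis
    then have "g ** M ** matrix_inv g = eitheta th" using gR unfolding M eitheta_Q by simp
    then show ?thesis unfolding Spin2_def by simp
  qed
  then show ?thesis unfolding is_G_rep_def using gS by blast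
qed

theorem proposition3p1:
  fixes a b c d x y z :: real and RA RB RC RD :: cmat
  assumes "a \<in> {-2..2} - {-2, 2}" "b \<in> {-2..2} - {-2, 2}"
      and "c \<in> {-2..2} - {-2, 2}" "d \<in> {-2..2} - {-2, 2}"
      and "(RA, RB, RC, RD) \<in> H_kappa a b c d"
      and "mtr (RA ** RB) = complex_of_real x"
      and "mtr (RB ** RC) = complex_of_real y"
      and "mtr (RC ** RA) = complex_of_real z"
  shows "is_G_rep Spin2 RA RB RC RD \<longleftrightarrow>
           (is_endpoint x a b \<and> is_endpoint x c d \<and>
            is_endpoint y b c \<and> is_endpoint y a d \<and>
            is_endpoint z a c \<and> is_endpoint z b d)"
proof -
  have H: "is_rep RA RB RC RD" "mtr RA = complex_of_real a" "mtr RB = complex_of_real b"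
    "mtr RC = complex_of_real c" "mtr RD = complex_of_real d"
    using assms(5) by (auto simp: H_kappa_def)
  show ?thesis
  proof
    assume "is_G_rep Spin2 RA RB RC RD"
    then show "is_endpoint x a b \<and> is_endpoint x c d \<and>
            is_endpoint y b c \<and> is_endpoint y a d \<and>
            is_endpoint z a c \<and> is_endpoint z b d"
      using forward[OF H assms(6-8)] by blast
  next
    assume "is_endpoint x a b \<and> is_endpoint x c d \<and>
            is_endpoint y b c \<and> is_endpoint y a d \<and>
            is_endpoint z a c \<and> is_endpoint z b d"
    then show "is_G_rep Spin2 RA RB RC RD"
      using backward[OF H(1) assms(1) H(2-4) assms(6) assms(8)] by blast
  qed
qed

end
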